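(* Under the saturation assumption below, each of the quantities $A_1=\sum_{\mathcal I\in\overline{\mathbb I}^*}\overline E_{\mathcal I}$, $A_2=1+\sum_{\mathcal I\in\mathbb I}T_{\mathcal I}$, $B_1=\sum_{\mathcal I\in\mathbb I^*}E_{\mathcal I}$, $B_2=1+\sum_{\mathcal I\in\overline{\mathbb I}}\overline T_{\mathcal I}$, $C_1=\sum_{\mathcal I\in\mathbb I^{-*}}E_{\mathcal I}$ (viewed as functions of $\delta\in(0,\bar\delta]$) can be written as $P(\delta)/D(\delta)$, where $P$ and $D$ are polynomials in $\delta$, $D$ is a finite product of factors of the form $|\alpha_{\mathcal E(\mathcal I)}|-|\alpha_{\mathcal I}|$ ($\mathcal I\in\mathbb I$) or $|\alpha_{\overline{\mathcal E}(\mathcal I)}|-|\alpha_{\mathcal I}|$ ($\mathcal I\in\overline{\mathbb I}$), and the constant term of $P$ is positive, i.e. $P(0)>0$.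
   Context: A matching model: finite connected simple graph $\mathcal G=(\mathcal V,\xi)$, $\mathcal V=\{1,\dots,n\}$, arrival distribution $\alpha$ on $\mathcal V$; FCFS policy (an arriving item of class $i$ is matched with the oldest present item whose class is a neighbour of $i$, otherwise it waits). $\mathcal E(i)$ is the neighbour set of $i$ in $\mathcal G$, $\mathcal E(V)=\bigcup_{i\in V}\mathcal E(i)$, $|\alpha_V|=\sum_{i\in V}\alpha_i$. An independent set is a non-empty set of pairwise non-adjacent nodes; $\mathbb I$ is the set of independent sets of $\mathcal G$. Fix distinct non-adjacent nodes $i^*,j^*$; $\overline{\mathcal G}$ is $\mathcal G$ with edge $\{i^*,j^*\}$ added, with neighbourhood map $\overline{\mathcal E}$ and set of independent sets $\overline{\mathbb I}$. $\mathbb I^*=\{\mathcal I\in\mathbb I: i^*\in\mathcal I\text{ or }j^*\in\mathcal I\}$, $\mathbb I^{-*}=\mathbb I\setminus\mathbb I^*$, $\overline{\mathbb I}^*=\{\mathcal I\in\overline{\mathbb I}: i^*\in\mathcal I\text{ or }j^*\in\mathcal I\}$. For $\mathcal I\in\mathbb I$ and an ordering $(i_1,\dots,i_m)$ of $\mathcal I$, with $\mathcal I_k=\{i_1,\dots,i_k\}$, set $T_{(i_1,\dots,i_m)}=\prod_{k=1}^m\frac{\alpha_{i_k}}{|\alpha_{\mathcal E(\mathcal I_k)}|-|\alpha_{\mathcal I_k}|}$ and $E_{(i_1,\dots,i_m)}=\sum_{l=1}^m\frac{|\alpha_{\mathcal E(\mathcal I_l)}|}{|\alpha_{\mathcal E(\mathcal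 I_l)}|-|\alpha_{\mathcal I_l}|}T_{(i_1,\dots,i_m)}$; $T_{\mathcal I}$, $E_{\mathcal I}$ are the sums over all orderings of $\mathcal I$. $\overline T_{\mathcal I},\overline E_{\mathcal I}$ ($\mathcal I\in\overline{\mathbb I}$) are defined identically with $\mathcal E$ replaced by $\overline{\mathcal E}$. Saturation assumption: $\alpha_i=a_i+b_i\delta$ with constants $a_i>0$, $b_i\in\mathbb R$, such that for all $\delta\in(0,\bar\delta]$ (some $\bar\delta>0$) $\alpha$ is a probability distribution satisfying the stability condition $|\alpha_{\mathcal I}|<|\alpha_{\mathcal E(\mathcal I)}|$ for all $\mathcal I\in\mathbb I$; moreover $\sum_{i\in\mathcal E(\hat{\mathcal I})}a_i-\sum_{i\in\hat{\mathcal I}}a_i=0$ for exactly one independent set $\hat{\mathcal I}\in\mathbb I$ (called saturated). *)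

theory Defs
  imports Complex_Main "HOL-Computational_Algebra.Polynomial" "HOL-Combinatorics.Multiset_Permutations"
begin

definition simple_graph :: "nat set \<Rightarrow> (nat \<Rightarrow> nat \<Rightarrow> bool) \<Rightarrow> bool" where
  "simple_graph V G \<longleftrightarrow> finite V \<and> V \<noteq> {} \<and>
     (\<forall>i j. G i j \<longrightarrow> i \<in> V \<and> j \<in> V) \<and> (\<forall>i j. G i j \<longrightarrow> G j i) \<and> (\<forall>i. \<not> G i i)"

definition graph_connected :: "nat set \<Rightarrow> (nat \<Rightarrow> nat \<Rightarrow> bool) \<Rightarrow> bool" where
  "graph_connected V G \<longleftrightarrow> (\<forall>i\<in>V. \<forall>j\<in>V. (i, j) \<in> {(x, y). G x y}\<^sup>*)"

definition add_edge :: "(nat \<Rightarrow> nat \<Rightarrow> bool) \<Rightarrow> nat \<Rightarrow> nat \<Rightarrow> nat \<Rightarrow> nat \<Rightarrow> bool" where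
  "add_edge G i j = (\<lambda>x y. G x y \<or> (x = i \<and> y = j) \<or> (x = j \<and> y = i))"

definition nbrs :: "(nat \<Rightarrow> nat \<Rightarrow> bool) \<Rightarrow> nat set \<Rightarrow> nat set" where
  "nbrs G S = (\<Union>i\<in>S. {j. G i j})"

definition indep_sets :: "nat set \<Rightarrow> (nat \<Rightarrow> nat \<Rightarrow> bool) \<Rightarrow> nat set set" where
  "indep_sets V G = {S. S \<noteq> {} \<and> S \<subseteq> V \<and> (\<forall>i\<in>S. \<forall>j\<in>S. \<not> G i j)}"

definition msum :: "(nat \<Rightarrow> real) \<Rightarrow> nat set \<Rightarrow> real" where
  "msum \<alpha> S = (\<Sum>i\<in>S. \<alpha> i)"

definition T_ord :: "(nat \<Rightarrow> nat \<Rightarrow> bool) \<Rightarrow> (nat \<Rightarrow> real) \<Rightarrow> nat list \<Rightarrow> real" where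
  "T_ord G \<alpha> xs = (\<Prod>k=1..length xs.
      \<alpha> (xs ! (k - 1)) / (msum \<alpha> (nbrs G (set (take k xs))) - msum \<alpha> (set (take k xs))))"

definition E_ord :: "(nat \<Rightarrow> nat \<Rightarrow> bool) \<Rightarrow> (nat \<Rightarrow> real) \<Rightarrow> nat list \<Rightarrow> real" where
  "E_ord G \<alpha> xs = (\<Sum>l=1..length xs.
      msum \<alpha> (nbrs G (set (take l xs))) /
        (msum \<alpha> (nbrs G (set (take l xs))) - msum \<alpha> (set (take l xs)))) * T_ord G \<alpha> xs"

definition T_set :: "(nat \<Rightarrow> nat \<Rightarrow> bool) \<Rightarrow> (nat \<Rightarrow> real) \<Rightarrow> nat set \<Rightarrow> real" where
  "T_set G \<alpha> I = (\<Sum>xs\<in>permutations_of_set I. T_ord G \<alpha> xs)"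

definition E_set :: "(nat \<Rightarrow> nat \<Rightarrow> bool) \<Rightarrow> (nat \<Rightarrow> real) \<Rightarrow> nat set \<Rightarrow> real" where
  "E_set G \<alpha> I = (\<Sum>xs\<in>permutations_of_set I. E_ord G \<alpha> xs)"

(* the polynomial in \<delta>:  |\<alpha>_{\<E>(I)}| - |\<alpha>_I|  with \<alpha>_i = a_i + b_i \<delta> *)
definition gap_poly :: "(nat \<Rightarrow> real) \<Rightarrow> (nat \<Rightarrow> real) \<Rightarrow> (nat \<Rightarrow> nat \<Rightarrow> bool) \<Rightarrow> nat set \<Rightarrow> real poly" where
  "gap_poly a b G I = (\<Sum>i\<in>nbrs G I. [:a i, b i:]) - (\<Sum>i\<in>I. [:a i, b i:])"

definition rational_form ::
  "(real \<Rightarrow> real) \<Rightarrow> real \<Rightarrow> real poly set \<Rightarrow> bool" where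
  "rational_form Q dbar factors \<longleftrightarrow>
     (\<exists>P D fs. (\<forall>\<delta>\<in>{0<..dbar}. Q \<delta> = poly P \<delta> / poly D \<delta>) \<and>
        D = prod_list fs \<and> set fs \<subseteq> factors \<and> poly P 0 > 0)"

end

theory Submission
  imports Defs
begin


definition nice :: "real poly \<Rightarrow> real poly set \<Rightarrow> real \<Rightarrow> (real \<Rightarrow> real) \<Rightarrow> bool" where
  "nice z F d f \<longleftrightarrow> (\<exists>N k R. (\<forall>\<delta>\<in>{0<..d}. f \<delta> = poly N \<delta> / (poly z \<delta> ^ k * poly (prod_list R) \<delta>))
      \<and> set R \<subseteq> F \<and> (\<forall>r\<in>set R. poly r 0 > 0) \<and> poly N 0 > 0)"

lemma prod_list_pos:
  assumes "set R \<subseteq> F" "\<forall>r\<in>F. poly r x > (0::real)" shows "poly (prod_list R) x > 0"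
  using assms by (induction R) auto

lemma prod_list_pos0:
  assumes "\<forall>r\<in>set R. poly r 0 > (0::real)" shows "poly (prod_list R) 0 > 0"
  using assms by (induction R) auto

lemma nice_cong:
  assumes "nice z F d f" "\<forall>\<delta>\<in>{0<..d}. f \<delta> = g \<delta>" shows "nice z F d g"
  using assms unfolding nice_def by metis

lemma nice_const: "c > 0 \<Longrightarrow> nice z F d (\<lambda>_. c)"
  unfolding nice_def by (rule exI[of _ "[:c:]"], rule exI[of _ 0], rule exI[of _ "[]"]) auto

lemma nice_atom: "poly p 0 > 0 \<Longrightarrow> nice z F d (\<lambda>\<delta>. poly p \<delta>)"
  unfolding nice_def by (rule exI[of _ p], rule exI[of _ 0], rule exI[of _ "[]"]) auto

lemma nice_inv_pos: "r \<in> F \<Longrightarrow> poly r 0 > 0 \<Longrightarrow> nice z F d (\<lambda>\<delta>. 1 / poly r \<delta>)"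
  unfolding nice_def by (rule exI[of _ 1], rule exI[of _ 0], rule exI[of _ "[r]"]) auto

lemma nice_inv_z: "nice z F d (\<lambda>\<delta>. 1 / poly z \<delta>)"
  unfolding nice_def by (rule exI[of _ 1], rule exI[of _ 1], rule exI[of _ "[]"]) auto

lemma nice_mult:
  assumes "nice z F d f" "nice z F d g"
  shows "nice z F d (\<lambda>\<delta>. f \<delta> * g \<delta>)"
proof -
  obtain N1 k1 R1 where 1: "\<forall>\<delta>\<in>{0<..d}. f \<delta> = poly N1 \<delta> / (poly z \<delta> ^ k1 * poly (prod_list R1) \<delta>)"
    "set R1 \<subseteq> F" "\<forall>r\<in>set R1. poly r 0 > 0" "poly N1 0 > 0" using assms(1) unfolding nice_def by blast
  obtain N2 k2 R2 where 2: "\<forall>\<delta>\<in>{0<..d}. g \<delta> = poly N2 \<delta> / (poly z \<delta> ^ k2 * poly (prod_list R2) \<delta>)"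
    "set R2 \<subseteq> F" "\<forall>r\<in>set R2. poly r 0 > 0" "poly N2 0 > 0" using assms(2) unfolding nice_def by blast
  show ?thesis unfolding nice_def
  proof (intro exI conjI)
    show "\<forall>\<delta>\<in>{0<..d}. f \<delta> * g \<delta> = poly (N1*N2) \<delta> / (poly z \<delta> ^ (k1+k2) * poly (prod_list (R1@R2)) \<delta>)"
      using 1(1) 2(1) by (simp add: power_add)
  qed (use 1 2 in auto)
qed

lemma frac_add:
  fixes p r1 r2 n1 n2 :: real
  assumes "p \<noteq> 0" "r1 \<noteq> 0" "r2 \<noteq> 0" "k2 \<le> k1"
  shows "n1/(p^k1*r1) + n2/(p^k2*r2) = (n1*r2 + n2*p^(k1-k2)*r1)/(p^k1*(r1*r2))"
proof -
  obtain m where "k1 = k2 + m" using assms(4) le_Suc_ex by blast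
  then show ?thesis using assms by (simp add: power_add field_simps)
qed

lemma nice_add_aux:
  assumes Fpos: "\<forall>r\<in>F. \<forall>\<delta>\<in>{0<..d}. poly r \<delta> > 0" and zF: "z \<in> F" and z0: "poly z 0 \<ge> 0"
  and 1: "\<forall>\<delta>\<in>{0<..d}. f \<delta> = poly N1 \<delta> / (poly z \<delta> ^ k1 * poly (prod_list R1) \<delta>)"
    "set R1 \<subseteq> F" "\<forall>r\<in>set R1. poly r 0 > 0" "poly N1 0 > 0"
  and 2: "\<forall>\<delta>\<in>{0<..d}. g \<delta> = poly N2 \<delta> / (poly z \<delta> ^ k2 * poly (prod_list R2) \<delta>)"
    "set R2 \<subseteq> F" "\<forall>r\<in>set R2. poly r 0 > 0" "poly N2 0 > 0"
  and k: "k2 \<le> k1"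
  shows "nice z F d (\<lambda>\<delta>. f \<delta> + g \<delta>)"
  unfolding nice_def
proof (intro exI conjI)
  show "\<forall>\<delta>\<in>{0<..d}. f \<delta> + g \<delta> = poly (N1 * prod_list R2 + N2 * z^(k1-k2) * prod_list R1) \<delta> /
      (poly z \<delta> ^ k1 * poly (prod_list (R1@R2)) \<delta>)"
  proof
    fix \<delta> assume d: "\<delta> \<in> {0<..d}"
    have "poly z \<delta> > 0" using Fpos zF d by blast
    moreover have "poly (prod_list R1) \<delta> > 0" "poly (prod_list R2) \<delta> > 0"
      using prod_list_pos[of _ F \<delta>] 1(2) 2(2) Fpos d by auto
    ultimately show "f \<delta> + g \<delta> = poly (N1 * prod_list R2 + N2 * z^(k1-k2) * prod_list R1) \<delta> /
      (poly z \<delta> ^ k1 * poly (prod_list (R1@R2)) \<delta>)"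
      using 1(1) 2(1) d frac_add[of "poly z \<delta>" "poly (prod_list R1) \<delta>" "poly (prod_list R2) \<delta>" k2 k1]
      by (simp add: k)
  qed
  have a: "poly (prod_list R1) 0 > 0" "poly (prod_list R2) 0 > 0" using prod_list_pos0 1(3) 2(3) by auto
  have "poly z 0 ^ (k1-k2) \<ge> 0" using z0 by simp
  then have "poly N2 0 * poly z 0 ^ (k1-k2) * poly (prod_list R1) 0 \<ge> 0"
    using a 2(4) by simp
  moreover have "poly N1 0 * poly (prod_list R2) 0 > 0" using a 1(4) by simp
  ultimately show "poly (N1 * prod_list R2 + N2 * z^(k1-k2) * prod_list R1) 0 > 0" by simp
qed (use 1 2 in auto)

lemma nice_add:
  assumes Fpos: "\<forall>r\<in>F. \<forall>\<delta>\<in>{0<..d}. poly r \<delta> > 0" and zF: "z \<in> F" and z0: "poly z 0 \<ge> 0"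
  and "nice z F d f" "nice z F d g"
  shows "nice z F d (\<lambda>\<delta>. f \<delta> + g \<delta>)"
proof -
  obtain N1 k1 R1 where 1: "\<forall>\<delta>\<in>{0<..d}. f \<delta> = poly N1 \<delta> / (poly z \<delta> ^ k1 * poly (prod_list R1) \<delta>)"
    "set R1 \<subseteq> F" "\<forall>r\<in>set R1. poly r 0 > 0" "poly N1 0 > 0" using assms(4) unfolding nice_def by blast
  obtain N2 k2 R2 where 2: "\<forall>\<delta>\<in>{0<..d}. g \<delta> = poly N2 \<delta> / (poly z \<delta> ^ k2 * poly (prod_list R2) \<delta>)"
    "set R2 \<subseteq> F" "\<forall>r\<in>set R2. poly r 0 > 0" "poly N2 0 > 0" using assms(5) unfolding nice_def by blast
  show ?thesis
  proof (cases "k2 \<le> k1")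
    case True then show ?thesis using nice_add_aux[OF Fpos zF z0 1 2] by blast
  next
    case False
    then have "nice z F d (\<lambda>\<delta>. g \<delta> + f \<delta>)" using nice_add_aux[OF Fpos zF z0 2 1] by simp
    then show ?thesis by (simp add: add.commute)
  qed
qed

lemma nice_prod:
  assumes "finite S" "\<forall>k\<in>S. nice z F d (h k)"
  shows "nice z F d (\<lambda>\<delta>. \<Prod>k\<in>S. h k \<delta>)"
  using assms
proof (induction S rule: finite_induct)
  case empty then show ?case using nice_const[of 1] by simp
next
  case (insert x S)
  then show ?case using nice_mult[of z F d "h x" "\<lambda>\<delta>. \<Prod>k\<in>S. h k \<delta>"] by simp
qed

lemma nice_sum:
  assumes Fpos: "\<forall>r\<in>F. \<forall>\<delta>\<in>{0<..d}. poly r \<delta> > 0" and zF: "z \<in> F" and z0: "poly z 0 \<ge> 0"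
  and "finite S" "S \<noteq> {}" "\<forall>k\<in>S. nice z F d (h k)"
  shows "nice z F d (\<lambda>\<delta>. \<Sum>k\<in>S. h k \<delta>)"
  using assms(4-6)
proof (induction S rule: finite_ne_induct)
  case (singleton x) then show ?case by simp
next
  case (insert x S)
  then show ?case using nice_add[OF Fpos zF z0, of "h x" "\<lambda>\<delta>. \<Sum>k\<in>S. h k \<delta>"] by simp
qed

lemma nice_rational_form:
  assumes "nice z F d f" "z \<in> F" shows "rational_form f d F"
proof -
  obtain N k R where 1: "\<forall>\<delta>\<in>{0<..d}. f \<delta> = poly N \<delta> / (poly z \<delta> ^ k * poly (prod_list R) \<delta>)"
    "set R \<subseteq> F" "poly N 0 > 0" using assms(1) unfolding nice_def by blast
  have eq: "\<forall>\<delta>\<in>{0<..d}. f \<delta> = poly N \<delta> / poly (prod_list (replicate k z @ R)) \<delta>"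
    using 1(1) by simp
  have s: "set (replicate k z @ R) \<subseteq> F" using 1(2) assms(2) by auto
  show ?thesis unfolding rational_form_def using eq s 1(3) by blast
qed


lemma indep_sub: "J \<in> indep_sets V H \<Longrightarrow> K \<subseteq> J \<Longrightarrow> K \<noteq> {} \<Longrightarrow> K \<in> indep_sets V H"
  unfolding indep_sets_def by blast

lemma take_sub:
  assumes "xs \<in> permutations_of_set I" "I \<in> indep_sets V H" "k \<in> {1..length xs}"
  shows "set (take k xs) \<in> indep_sets V H" "xs ! (k - 1) \<in> V"
proof -
  have s: "set xs = I" using permutations_of_setD[OF assms(1)] by simp
  have "take k xs \<noteq> []" using assms(3) by auto
  then have "set (take k xs) \<noteq> {}" by simp
  moreover have "set (take k xs) \<subseteq> I" using s set_take_subset by metis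
  ultimately show "set (take k xs) \<in> indep_sets V H" using indep_sub assms(2) by blast
  have "xs ! (k - 1) \<in> set xs" using assms(3) by auto
  then show "xs ! (k - 1) \<in> V" using s assms(2) unfolding indep_sets_def by auto
qed

lemma T_nice:
  assumes gapnice: "\<forall>J\<in>indep_sets V H. nice z F d (\<lambda>\<delta>. 1 / (msum (\<alpha> \<delta>) (nbrs H J) - msum (\<alpha> \<delta>) J))"
  and alphanice: "\<forall>x\<in>V. nice z F d (\<lambda>\<delta>. \<alpha> \<delta> x)"
  and I: "I \<in> indep_sets V H" and xs: "xs \<in> permutations_of_set I"
  shows "nice z F d (\<lambda>\<delta>. T_ord H (\<alpha> \<delta>) xs)"
proof -
  have "\<forall>k\<in>{1..length xs}. nice z F d (\<lambda>\<delta>. \<alpha> \<delta> (xs!(k-1)) /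
      (msum (\<alpha> \<delta>) (nbrs H (set (take k xs))) - msum (\<alpha> \<delta>) (set (take k xs))))"
  proof
    fix k assume k: "k \<in> {1..length xs}"
    have "nice z F d (\<lambda>\<delta>. \<alpha> \<delta> (xs!(k-1)) *
      (1 / (msum (\<alpha> \<delta>) (nbrs H (set (take k xs))) - msum (\<alpha> \<delta>) (set (take k xs)))))"
      using nice_mult gapnice alphanice take_sub[OF xs I k] by blast
    then show "nice z F d (\<lambda>\<delta>. \<alpha> \<delta> (xs!(k-1)) /
      (msum (\<alpha> \<delta>) (nbrs H (set (take k xs))) - msum (\<alpha> \<delta>) (set (take k xs))))" by simp
  qed
  from nice_prod[OF _ this] show ?thesis unfolding T_ord_def by simp
qed

lemma E_nice:
  assumes Fpos: "\<forall>r\<in>F. \<forall>\<delta>\<in>{0<..d}. poly r \<delta> > 0" and zF: "z \<in> F" and z0: "poly z 0 \<ge> 0"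
  and gapnice: "\<forall>J\<in>indep_sets V H. nice z F d (\<lambda>\<delta>. 1 / (msum (\<alpha> \<delta>) (nbrs H J) - msum (\<alpha> \<delta>) J))"
  and nbnice: "\<forall>J\<in>indep_sets V H. nice z F d (\<lambda>\<delta>. msum (\<alpha> \<delta>) (nbrs H J))"
  and alphanice: "\<forall>x\<in>V. nice z F d (\<lambda>\<delta>. \<alpha> \<delta> x)"
  and I: "I \<in> indep_sets V H" and xs: "xs \<in> permutations_of_set I"
  shows "nice z F d (\<lambda>\<delta>. E_ord H (\<alpha> \<delta>) xs)"
proof -
  have all: "\<forall>k\<in>{1..length xs}. nice z F d (\<lambda>\<delta>. msum (\<alpha> \<delta>) (nbrs H (set (take k xs))) /
      (msum (\<alpha> \<delta>) (nbrs H (set (take k xs))) - msum (\<alpha> \<delta>) (set (take k xs))))"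
  proof
    fix k assume k: "k \<in> {1..length xs}"
    have "nice z F d (\<lambda>\<delta>. msum (\<alpha> \<delta>) (nbrs H (set (take k xs))) *
      (1 / (msum (\<alpha> \<delta>) (nbrs H (set (take k xs))) - msum (\<alpha> \<delta>) (set (take k xs)))))"
      using nice_mult gapnice nbnice take_sub[OF xs I k] by blast
    then show "nice z F d (\<lambda>\<delta>. msum (\<alpha> \<delta>) (nbrs H (set (take k xs))) /
      (msum (\<alpha> \<delta>) (nbrs H (set (take k xs))) - msum (\<alpha> \<delta>) (set (take k xs))))" by simp
  qed
  have ne: "{1..length xs} \<noteq> {}"
    using permutations_of_setD[OF xs] I unfolding indep_sets_def by (cases xs) auto
  have "nice z F d (\<lambda>\<delta>. \<Sum>k\<in>{1..length xs}. msum (\<alpha> \<delta>) (nbrs H (set (take k xs))) /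
      (msum (\<alpha> \<delta>) (nbrs H (set (take k xs))) - msum (\<alpha> \<delta>) (set (take k xs))))"
    using nice_sum[OF Fpos zF z0 finite_atLeastAtMost ne all] .
  from nice_mult[OF this T_nice[OF gapnice alphanice I xs]] show ?thesis unfolding E_ord_def by simp
qed

lemma Eset_nice:
  assumes Fpos: "\<forall>r\<in>F. \<forall>\<delta>\<in>{0<..d}. poly r \<delta> > 0" and zF: "z \<in> F" and z0: "poly z 0 \<ge> 0"
  and gapnice: "\<forall>J\<in>indep_sets V H. nice z F d (\<lambda>\<delta>. 1 / (msum (\<alpha> \<delta>) (nbrs H J) - msum (\<alpha> \<delta>) J))"
  and nbnice: "\<forall>J\<in>indep_sets V H. nice z F d (\<lambda>\<delta>. msum (\<alpha> \<delta>) (nbrs H J))"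
  and alphanice: "\<forall>x\<in>V. nice z F d (\<lambda>\<delta>. \<alpha> \<delta> x)"
  and fin: "finite V" and I: "I \<in> indep_sets V H"
  shows "nice z F d (\<lambda>\<delta>. E_set H (\<alpha> \<delta>) I)" "nice z F d (\<lambda>\<delta>. T_set H (\<alpha> \<delta>) I)"
proof -
  have "finite I" using I fin unfolding indep_sets_def by (auto intro: finite_subset)
  then have ne: "permutations_of_set I \<noteq> {}" by simp
  show "nice z F d (\<lambda>\<delta>. E_set H (\<alpha> \<delta>) I)" unfolding E_set_def
    using nice_sum[OF Fpos zF z0 finite_permutations_of_set ne] E_nice[OF Fpos zF z0 gapnice nbnice alphanice I] by simp
  show "nice z F d (\<lambda>\<delta>. T_set H (\<alpha> \<delta>) I)" unfolding T_set_def
    using nice_sum[OF Fpos zF z0 finite_permutations_of_set ne] T_nice[OF gapnice alphanice I] by simp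
qed

lemma lin_nonneg:
  fixes A B d :: real
  assumes "\<forall>\<delta>\<in>{0<..d}. A + B * \<delta> > 0" "d > 0" shows "A \<ge> 0"
proof (rule ccontr)
  assume "\<not> A \<ge> 0"
  then have A: "A < 0" by simp
  define \<delta> where "\<delta> = min d (-A / (\<bar>B\<bar> + 1))"
  have "-A / (\<bar>B\<bar> + 1) > 0" using divide_pos_pos[of "-A" "\<bar>B\<bar>+1"] A by (simp add: add_nonneg_pos)
  then have pos: "\<delta> > 0" using assms(2) by (simp add: \<delta>_def)
  have "\<delta> \<le> -A / (\<bar>B\<bar> + 1)" by (simp add: \<delta>_def)
  then have "\<delta> * (\<bar>B\<bar> + 1) \<le> -A" by (simp add: field_simps)
  then have "\<bar>B\<bar> * \<delta> < -A" using pos by (simp add: algebra_simps)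
  moreover have "B * \<delta> \<le> \<bar>B\<bar> * \<delta>" using pos by (simp add: mult_right_mono)
  moreover have "\<delta> \<in> {0<..d}" using pos by (simp add: \<delta>_def)
  ultimately have "A + B * \<delta> < 0" "A + B * \<delta> > 0" using assms(1) by (linarith, blast)
  then show False by simp
qed

lemma gap_poly_eval: "poly (gap_poly a b H I) \<delta> = msum (\<lambda>i. a i + b i * \<delta>) (nbrs H I) - msum (\<lambda>i. a i + b i * \<delta>) I"
  by (simp add: gap_poly_def msum_def poly_sum mult.commute)

lemma msum_lin: "msum (\<lambda>i. a i + b i * \<delta>) S = msum a S + msum b S * \<delta>"
  by (simp add: msum_def sum.distrib sum_distrib_right)



theorem mainTheorem6:
  fixes n :: nat and G :: "nat \<Rightarrow> nat \<Rightarrow> bool" and a b :: "nat \<Rightarrow> real"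
    and dbar :: real and istar jstar :: nat
  assumes graph: "simple_graph {1..n} G"
    and conn: "graph_connected {1..n} G"
    and ij: "istar \<in> {1..n}" "jstar \<in> {1..n}" "istar \<noteq> jstar" "\<not> G istar jstar"
    and a_pos: "\<forall>i\<in>{1..n}. a i > 0"
    and dbar_pos: "dbar > 0"
    and distr: "\<forall>\<delta>\<in>{0<..dbar}. (\<forall>i\<in>{1..n}. a i + b i * \<delta> \<ge> 0) \<and>
                  (\<Sum>i\<in>{1..n}. a i + b i * \<delta>) = 1"
    and stable: "\<forall>\<delta>\<in>{0<..dbar}. \<forall>I\<in>indep_sets {1..n} G.
                  msum (\<lambda>i. a i + b i * \<delta>) I < msum (\<lambda>i. a i + b i * \<delta>) (nbrs G I)"
    and saturated: "\<exists>!I. I \<in> indep_sets {1..n} G \<and> msum a (nbrs G I) - msum a I = 0"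
  shows
   "let \<alpha> = (\<lambda>\<delta> i. a i + b i * \<delta>);
        G' = add_edge G istar jstar;
        II = indep_sets {1..n} G;
        II' = indep_sets {1..n} G';
        factors = {gap_poly a b G I | I. I \<in> II} \<union> {gap_poly a b G' I | I. I \<in> II'};
        A1 = (\<lambda>\<delta>. \<Sum>I\<in>{I\<in>II'. istar \<in> I \<or> jstar \<in> I}. E_set G' (\<alpha> \<delta>) I);
        A2 = (\<lambda>\<delta>. 1 + (\<Sum>I\<in>II. T_set G (\<alpha> \<delta>) I));
        B1 = (\<lambda>\<delta>. \<Sum>I\<in>{I\<in>II. istar \<in> I \<or> jstar \<in> I}. E_set G (\<alpha> \<delta>) I);
        B2 = (\<lambda>\<delta>. 1 + (\<Sum>I\<in>II'. T_set G' (\<alpha> \<delta>) I));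
        C1 = (\<lambda>\<delta>. \<Sum>I\<in>{I\<in>II. \<not> (istar \<in> I \<or> jstar \<in> I)}. E_set G (\<alpha> \<delta>) I)
    in rational_form A1 dbar factors \<and> rational_form A2 dbar factors \<and>
       rational_form B1 dbar factors \<and> rational_form B2 dbar factors \<and>
       rational_form C1 dbar factors"
proof -
  define V where "V = {1..n}"
  define \<alpha> where "\<alpha> = (\<lambda>\<delta> (i::nat). a i + b i * \<delta>)"
  define G' where "G' = add_edge G istar jstar"
  define II where "II = indep_sets V G"
  define II' where "II' = indep_sets V G'"
  define F where "F = {gap_poly a b G I | I. I \<in> II} \<union> {gap_poly a b G' I | I. I \<in> II'}"
  have finV: "finite V" by (simp add: V_def)
  have Gsub: "\<And>i j. G i j \<Longrightarrow> i \<in> V \<and> j \<in> V" and Girr: "\<And>i. \<not> G i i"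
    using graph unfolding simple_graph_def V_def by auto
  have ijV: "istar \<in> V" "jstar \<in> V" using ij V_def by auto
  have nbV: "\<And>I. nbrs G I \<subseteq> V" using Gsub unfolding nbrs_def by blast
  have nbV': "\<And>I. nbrs G' I \<subseteq> V" using Gsub ijV unfolding nbrs_def G'_def add_edge_def by blast
  have nbmono: "\<And>I. nbrs G I \<subseteq> nbrs G' I" unfolding nbrs_def G'_def add_edge_def by blast
  have IIsub: "II' \<subseteq> II" unfolding II_def II'_def indep_sets_def G'_def add_edge_def by blast
  have finII: "finite II" 
    by (rule finite_subset[of _ "Pow V"]) (auto simp: II_def indep_sets_def finV)
  have finII': "finite II'" using finite_subset[OF IIsub finII] .
  have alpha_nonneg: "\<And>\<delta> i. \<delta> \<in> {0<..dbar} \<Longrightarrow> i \<in> V \<Longrightarrow> \<alpha> \<delta> i \<ge> 0"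
    using distr unfolding \<alpha>_def V_def by blast
  have gapeval: "\<And>H I \<delta>. poly (gap_poly a b H I) \<delta> = msum (\<alpha> \<delta>) (nbrs H I) - msum (\<alpha> \<delta>) I"
    unfolding \<alpha>_def by (rule gap_poly_eval)
  have gap0: "\<And>H I. poly (gap_poly a b H I) 0 = msum a (nbrs H I) - msum a I"
    by (simp add: gap_poly_eval)
  have split: "\<And>I f. msum f (nbrs G' I) = msum f (nbrs G I) + msum f (nbrs G' I - nbrs G I)"
  proof -
    fix I f
    have fin: "finite (nbrs G' I)" using finite_subset[OF nbV' finV] .
    show "msum f (nbrs G' I) = msum f (nbrs G I) + msum f (nbrs G' I - nbrs G I)"
      unfolding msum_def using sum.subset_diff[OF nbmono fin, of f] by simp
  qed
  have posG: "\<And>I \<delta>. I \<in> II \<Longrightarrow> \<delta>\<in>{0<..dbar} \<Longrightarrow> msum (\<alpha> \<delta>) (nbrs G I) - msum (\<alpha> \<delta>) I > 0"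
    using stable unfolding II_def V_def \<alpha>_def by auto
  have diffnn: "\<And>I \<delta>. \<delta>\<in>{0<..dbar} \<Longrightarrow> msum (\<alpha> \<delta>) (nbrs G' I - nbrs G I) \<ge> 0"
    unfolding msum_def using alpha_nonneg nbV' by (meson Diff_subset subset_iff sum_nonneg)
  have posG': "\<And>I \<delta>. I \<in> II' \<Longrightarrow> \<delta>\<in>{0<..dbar} \<Longrightarrow> msum (\<alpha> \<delta>) (nbrs G' I) - msum (\<alpha> \<delta>) I > 0"
  proof -
    fix I \<delta> assume "I \<in> II'" "\<delta>\<in>{0<..dbar}"
    then show "msum (\<alpha> \<delta>) (nbrs G' I) - msum (\<alpha> \<delta>) I > 0"
      using posG[where I=I and \<delta>=\<delta>] IIsub diffnn[where I=I and \<delta>=\<delta>] split[where I=I and f="\<alpha> \<delta>"] by auto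
  qed
  have Fpos: "\<forall>r\<in>F. \<forall>\<delta>\<in>{0<..dbar}. poly r \<delta> > 0"
    unfolding F_def using posG posG' gapeval by auto
  obtain Ih where Ih: "Ih \<in> II" "msum a (nbrs G Ih) - msum a Ih = 0"
    and uniq: "\<And>I. I\<in>II \<Longrightarrow> msum a (nbrs G I) - msum a I = 0 \<Longrightarrow> I = Ih"
    using saturated unfolding II_def V_def by blast
  define z where "z = gap_poly a b G Ih"
  have zF: "z \<in> F" unfolding F_def z_def using Ih by blast
  have z0: "poly z 0 \<ge> 0" unfolding z_def gap0 using Ih by simp
  have nonnegG: "\<And>I. I \<in> II \<Longrightarrow> msum a (nbrs G I) - msum a I \<ge> 0"
  proof -
    fix I assume I: "I \<in> II"
    have "\<forall>\<delta>\<in>{0<..dbar}. (msum a (nbrs G I) - msum a I) + (msum b (nbrs G I) - msum b I) * \<delta> > 0"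
      using posG[OF I] unfolding \<alpha>_def msum_lin by (simp add: algebra_simps)
    from lin_nonneg[OF this dbar_pos] show "msum a (nbrs G I) - msum a I \<ge> 0" .
  qed
  have gapG: "\<forall>I\<in>II. nice z F dbar (\<lambda>\<delta>. 1/(msum (\<alpha> \<delta>)(nbrs G I) - msum (\<alpha> \<delta>) I))"
  proof
    fix I assume I: "I \<in> II"
    show "nice z F dbar (\<lambda>\<delta>. 1/(msum (\<alpha> \<delta>)(nbrs G I) - msum (\<alpha> \<delta>) I))"
    proof (cases "msum a (nbrs G I) - msum a I = 0")
      case True
      then have "I = Ih" using uniq I by blast
      then show ?thesis using nice_inv_z[of z F dbar] unfolding z_def gapeval by simp
    next
      case False
      then have "poly (gap_poly a b G I) 0 > 0" using nonnegG[OF I] gap0 by simp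
      moreover have "gap_poly a b G I \<in> F" unfolding F_def using I by blast
      ultimately show ?thesis using nice_inv_pos[of "gap_poly a b G I" F z dbar] unfolding gapeval by simp
    qed
  qed
  have gapG': "\<forall>I\<in>II'. nice z F dbar (\<lambda>\<delta>. 1/(msum (\<alpha> \<delta>)(nbrs G' I) - msum (\<alpha> \<delta>) I))"
  proof
    fix I assume I': "I \<in> II'"
    then have I: "I \<in> II" using IIsub by blast
    have dnn: "msum a (nbrs G' I - nbrs G I) \<ge> 0" unfolding msum_def
      using a_pos nbV' unfolding V_def by (meson Diff_subset less_imp_le subset_iff sum_nonneg)
    show "nice z F dbar (\<lambda>\<delta>. 1/(msum (\<alpha> \<delta>)(nbrs G' I) - msum (\<alpha> \<delta>) I))"
    proof (cases "msum a (nbrs G' I) - msum a I = 0")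
      case True
      then have e1: "msum a (nbrs G I) - msum a I = 0" and e2: "msum a (nbrs G' I - nbrs G I) = 0"
        using split[where I=I and f=a] nonnegG[OF I] dnn by auto
      have "nbrs G' I - nbrs G I = {}"
      proof (rule ccontr)
        assume ne: "nbrs G' I - nbrs G I \<noteq> {}"
        have "finite (nbrs G' I - nbrs G I)" using finite_subset[OF nbV' finV] by simp
        moreover have "\<forall>i\<in>nbrs G' I - nbrs G I. a i > 0" using a_pos nbV' unfolding V_def by blast
        ultimately have "msum a (nbrs G' I - nbrs G I) > 0" unfolding msum_def using ne sum_pos by blast
        then show False using e2 by simp
      qed
      then have "nbrs G' I = nbrs G I" using nbmono by blast
      moreover have "I = Ih" using uniq I e1 by blast
      ultimately show ?thesis using nice_inv_z[of z F dbar] unfolding z_def gapeval by simp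
    next
      case False
      then have "poly (gap_poly a b G' I) 0 > 0" using nonnegG[OF I] dnn split[where I=I and f=a] gap0 by simp
      moreover have "gap_poly a b G' I \<in> F" unfolding F_def using I' by blast
      ultimately show ?thesis using nice_inv_pos[of "gap_poly a b G' I" F z dbar] unfolding gapeval by simp
    qed
  qed
  have alphanice: "\<forall>x\<in>V. nice z F dbar (\<lambda>\<delta>. \<alpha> \<delta> x)"
  proof
    fix x assume "x \<in> V"
    then have "poly [:a x, b x:] 0 > 0" using a_pos V_def by simp
    from nice_atom[OF this, of z F dbar] show "nice z F dbar (\<lambda>\<delta>. \<alpha> \<delta> x)"
      unfolding \<alpha>_def by (simp add: mult.commute)
  qed
  have nbr_ex: "\<And>x. x \<in> V \<Longrightarrow> \<exists>y. G x y"
  proof -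
    fix x assume x: "x \<in> V"
    obtain y0 where y0: "y0 \<in> V" "y0 \<noteq> x" using ijV ij(3) by metis
    have "(x, y0) \<in> {(x, y). G x y}\<^sup>*" using conn x y0 unfolding graph_connected_def V_def by blast
    then show "\<exists>y. G x y" using y0(2) by (cases rule: converse_rtranclE) auto
  qed
  have nbne: "\<And>I. I \<in> II \<Longrightarrow> nbrs G I \<noteq> {}"
  proof -
    fix I assume "I \<in> II"
    then obtain x where "x \<in> I" "x \<in> V" unfolding II_def indep_sets_def by blast
    then show "nbrs G I \<noteq> {}" using nbr_ex unfolding nbrs_def by blast
  qed
  have msumnice: "\<And>S. S \<subseteq> V \<Longrightarrow> S \<noteq> {} \<Longrightarrow> nice z F dbar (\<lambda>\<delta>. msum (\<alpha> \<delta>) S)"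
  proof -
    fix S assume S: "S \<subseteq> V" "S \<noteq> {}"
    have fS: "finite S" using finite_subset[OF S(1) finV] .
    have "\<forall>k\<in>S. nice z F dbar (\<lambda>\<delta>. \<alpha> \<delta> k)" using alphanice S(1) by blast
    from nice_sum[OF Fpos zF z0 fS S(2) this] have "nice z F dbar (\<lambda>\<delta>. \<Sum>k\<in>S. \<alpha> \<delta> k)" .
    then show "nice z F dbar (\<lambda>\<delta>. msum (\<alpha> \<delta>) S)" unfolding msum_def by simp
  qed
  have nbniceG: "\<forall>J\<in>II. nice z F dbar (\<lambda>\<delta>. msum (\<alpha> \<delta>) (nbrs G J))"
  proof
    fix J assume "J \<in> II" then show "nice z F dbar (\<lambda>\<delta>. msum (\<alpha> \<delta>) (nbrs G J))"
      using nbV nbne by (intro msumnice) auto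
  qed
  have nbniceG': "\<forall>J\<in>II'. nice z F dbar (\<lambda>\<delta>. msum (\<alpha> \<delta>) (nbrs G' J))"
  proof
    fix J assume "J \<in> II'" then have "J \<in> II" "nbrs G J \<subseteq> nbrs G' J" using IIsub nbmono by auto
    then show "nice z F dbar (\<lambda>\<delta>. msum (\<alpha> \<delta>) (nbrs G' J))"
      using nbV' nbne by (intro msumnice) auto
  qed
  note EG = Eset_nice[OF Fpos zF z0 gapG[unfolded II_def] nbniceG[unfolded II_def] alphanice finV, folded II_def]
  note EG' = Eset_nice[OF Fpos zF z0 gapG'[unfolded II'_def] nbniceG'[unfolded II'_def] alphanice finV, folded II'_def]
  have si: "{istar} \<in> II'" "{istar} \<in> II" using ijV Girr ij(3)
    unfolding II'_def II_def indep_sets_def G'_def add_edge_def by auto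
  obtain k where k: "G istar k" using nbr_ex ijV by blast
  have sk: "{k} \<in> II" "k \<noteq> istar" "k \<noteq> jstar" using k Gsub Girr ij(4)
    unfolding II_def indep_sets_def by auto
  have finS: "finite {I\<in>II'. istar \<in> I \<or> jstar \<in> I}" "finite {I\<in>II. istar \<in> I \<or> jstar \<in> I}"
    "finite {I\<in>II. \<not> (istar \<in> I \<or> jstar \<in> I)}" using finII finII' by simp_all
  have neS: "{I\<in>II'. istar \<in> I \<or> jstar \<in> I} \<noteq> {}" "{I\<in>II. istar \<in> I \<or> jstar \<in> I} \<noteq> {}"
    "{I\<in>II. \<not> (istar \<in> I \<or> jstar \<in> I)} \<noteq> {}" "II \<noteq> {}" "II' \<noteq> {}"
    using si sk by blast+
  have allA1: "\<forall>I\<in>{I\<in>II'. istar \<in> I \<or> jstar \<in> I}. nice z F dbar (\<lambda>\<delta>. E_set G' (\<alpha> \<delta>) I)"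
  proof
    fix I assume "I \<in> {I\<in>II'. istar \<in> I \<or> jstar \<in> I}"
    then have "I \<in> II'" by simp
    then show "nice z F dbar (\<lambda>\<delta>. E_set G' (\<alpha> \<delta>) I)" by (rule EG'(1))
  qed
  have allB1: "\<forall>I\<in>{I\<in>II. istar \<in> I \<or> jstar \<in> I}. nice z F dbar (\<lambda>\<delta>. E_set G (\<alpha> \<delta>) I)"
  proof
    fix I assume "I \<in> {I\<in>II. istar \<in> I \<or> jstar \<in> I}"
    then have "I \<in> II" by simp
    then show "nice z F dbar (\<lambda>\<delta>. E_set G (\<alpha> \<delta>) I)" by (rule EG(1))
  qed
  have allC1: "\<forall>I\<in>{I\<in>II. \<not> (istar \<in> I \<or> jstar \<in> I)}. nice z F dbar (\<lambda>\<delta>. E_set G (\<alpha> \<delta>) I)"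
  proof
    fix I assume "I \<in> {I\<in>II. \<not> (istar \<in> I \<or> jstar \<in> I)}"
    then have "I \<in> II" by simp
    then show "nice z F dbar (\<lambda>\<delta>. E_set G (\<alpha> \<delta>) I)" by (rule EG(1))
  qed
  have allA2: "\<forall>I\<in>II. nice z F dbar (\<lambda>\<delta>. T_set G (\<alpha> \<delta>) I)"
  proof
    fix I assume "I \<in> II" then show "nice z F dbar (\<lambda>\<delta>. T_set G (\<alpha> \<delta>) I)" by (rule EG(2))
  qed
  have allB2: "\<forall>I\<in>II'. nice z F dbar (\<lambda>\<delta>. T_set G' (\<alpha> \<delta>) I)"
  proof
    fix I assume "I \<in> II'" then show "nice z F dbar (\<lambda>\<delta>. T_set G' (\<alpha> \<delta>) I)" by (rule EG'(2))
  qed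
  note A1 = nice_sum[OF Fpos zF z0 finS(1) neS(1) allA1]
  note B1 = nice_sum[OF Fpos zF z0 finS(2) neS(2) allB1]
  note C1 = nice_sum[OF Fpos zF z0 finS(3) neS(3) allC1]
  note A2 = nice_add[OF Fpos zF z0 nice_const[of 1] nice_sum[OF Fpos zF z0 finII neS(4) allA2], simplified]
  note B2 = nice_add[OF Fpos zF z0 nice_const[of 1] nice_sum[OF Fpos zF z0 finII' neS(5) allB2], simplified]
  have R: "rational_form (\<lambda>\<delta>. \<Sum>I\<in>{I\<in>II'. istar \<in> I \<or> jstar \<in> I}. E_set G' (\<alpha> \<delta>) I) dbar F \<and>
    rational_form (\<lambda>\<delta>. 1 + (\<Sum>I\<in>II. T_set G (\<alpha> \<delta>) I)) dbar F \<and>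
    rational_form (\<lambda>\<delta>. \<Sum>I\<in>{I\<in>II. istar \<in> I \<or> jstar \<in> I}. E_set G (\<alpha> \<delta>) I) dbar F \<and>
    rational_form (\<lambda>\<delta>. 1 + (\<Sum>I\<in>II'. T_set G' (\<alpha> \<delta>) I)) dbar F \<and>
    rational_form (\<lambda>\<delta>. \<Sum>I\<in>{I\<in>II. \<not> (istar \<in> I \<or> jstar \<in> I)}. E_set G (\<alpha> \<delta>) I) dbar F"
    using A1[THEN nice_rational_form, OF zF] A2[THEN nice_rational_form, OF zF]
    B1[THEN nice_rational_form, OF zF] B2[THEN nice_rational_form, OF zF] C1[THEN nice_rational_form, OF zF]
    by (intro conjI)
  then show ?thesis unfolding Let_def F_def II_def II'_def G'_def V_def \<alpha>_def .
qed

end
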